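(* Let $K$ be the $n\times n$ pinned Laplacian of a digraph, with eigenvalues $\lambda_{K,i}=m_ie^{j\phi_i}$, $1\le i\le n$, satisfying $0<\underline m\le m_i\le\overline m$ and $|\phi_i|\le\overline\phi<\pi/2$. Let $\beta>0$ satisfy $\beta>\max_i 1/\mathrm{Re}\{\lambda_{K,i}\}$ and $\beta\underline m\cos\overline\phi>1$, and define $$\overline\rho=\sqrt{(\beta\overline m\sin\overline\phi)^2+(\beta\overline m\cos\overline\phi-1)^2},\qquad \overline\psi=\tan^{-1}\!\left(\frac{\beta\underline m\sin\overline\phi}{\beta\underline m\cos\overline\phi-1}\right).$$ Let $\alpha\in\mathbb{R}$ and $\tau>0$. If $$\frac{\overline\rho+1}{\overline\rho\cos\overline\psi+1}-1<\alpha\tau,$$ then for every eigenvalue $\lambda_{K,i}$ of $K$, $$|\beta\lambda_{K,i}-1|-\big(\beta\,\mathrm{Re}\{\lambda_{K,i}\}-1\big)<\alpha\tau\,\mathrm{Re}\{\beta\lambda_{K,i}\}.$$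
   Context: The pinned Laplacian $K$ is obtained from a weighted digraph Laplacian $L$ (entries $l_{ik}=-w_{ik}$ for neighbors $k$ of $i$, $l_{ii}=\sum_m w_{im}$, else $0$, $w_{ik}>0$ for neighbors) on nodes $\{1,\dots,n+1\}$ by deleting the row and column of the source node $n+1$. Its eigenvalues have positive real parts. The concluded inequality is the sufficient condition for exponential stability of the delay system $\dot Z(t)=AZ(t)+A_dZ(t-\tau)$, $A=-\alpha\beta K+\frac1\tau[I-\beta K]$, $A_d=-\frac1\tau[I-\beta K]$. *)

theory Defs
  imports "HOL-Analysis.Analysis"
begin

text \<open>Weighted digraph on nodes {1..n+1}, given by weights w i k (w i k > 0 iff k is a
neighbour of i, w i k = 0 otherwise; no self-loops).\<close>

definition weighted_digraph :: "nat \<Rightarrow> (nat \<Rightarrow> nat \<Rightarrow> real) \<Rightarrow> bool" where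
  "weighted_digraph n w \<longleftrightarrow> (\<forall>i k. w i k \<ge> 0) \<and> (\<forall>i. w i i = 0)
     \<and> (\<forall>i k. (i \<notin> {1..n+1} \<or> k \<notin> {1..n+1}) \<longrightarrow> w i k = 0)"

definition digraph_laplacian :: "nat \<Rightarrow> (nat \<Rightarrow> nat \<Rightarrow> real) \<Rightarrow> nat \<Rightarrow> nat \<Rightarrow> real" where
  "digraph_laplacian n w i k =
     (if i = k then (\<Sum>m\<in>{1..n+1}. w i m) else - w i k)"

text \<open>Pinned Laplacian: delete row and column of the source node n+1, i.e. keep
indices {1..n}.\<close>
definition pinned_laplacian :: "nat \<Rightarrow> (nat \<Rightarrow> nat \<Rightarrow> real) \<Rightarrow> nat \<Rightarrow> nat \<Rightarrow> real" where
  "pinned_laplacian n w i k =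
     (if i \<in> {1..n} \<and> k \<in> {1..n} then digraph_laplacian n w i k else 0)"

definition is_eigenvalue :: "nat \<Rightarrow> (nat \<Rightarrow> nat \<Rightarrow> real) \<Rightarrow> complex \<Rightarrow> bool" where
  "is_eigenvalue n M z \<longleftrightarrow> (\<exists>v :: nat \<Rightarrow> complex. (\<exists>i\<in>{1..n}. v i \<noteq> 0) \<and>
     (\<forall>i\<in>{1..n}. (\<Sum>k\<in>{1..n}. complex_of_real (M i k) * v k) = z * v i))"

end

theory Submission
  imports Defs
begin

theorem corollary1:
  fixes n :: nat and w :: "nat \<Rightarrow> nat \<Rightarrow> real"
    and m_lo m_hi phi_hi beta alpha tau :: real
  assumes graph: "weighted_digraph n w"
    and eig_polar: "\<And>z. is_eigenvalue n (pinned_laplacian n w) z \<Longrightarrow>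
        \<exists>m \<phi>. z = complex_of_real m * cis \<phi> \<and> m_lo \<le> m \<and> m \<le> m_hi \<and> \<bar>\<phi>\<bar> \<le> phi_hi"
    and m_lo_pos: "0 < m_lo"
    and phi_hi_lt: "phi_hi < pi / 2"
    and beta_pos: "beta > 0"
    and beta_gt: "\<And>z. is_eigenvalue n (pinned_laplacian n w) z \<Longrightarrow> beta > 1 / Re z"
    and beta_cos: "beta * m_lo * cos phi_hi > 1"
    and tau_pos: "tau > 0"
    and cond: "(let rho = sqrt ((beta * m_hi * sin phi_hi)\<^sup>2 + (beta * m_hi * cos phi_hi - 1)\<^sup>2);
                    psi = arctan ((beta * m_lo * sin phi_hi) / (beta * m_lo * cos phi_hi - 1))
                in (rho + 1) / (rho * cos psi + 1) - 1 < alpha * tau)"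
  shows "\<forall>z. is_eigenvalue n (pinned_laplacian n w) z \<longrightarrow>
           cmod (complex_of_real beta * z - 1) - (beta * Re z - 1)
             < alpha * tau * Re (complex_of_real beta * z)"
proof (intro allI impI)
  fix z assume ez: "is_eigenvalue n (pinned_laplacian n w) z"
  obtain m \<phi> where zm: "z = complex_of_real m * cis \<phi>" and mlo: "m_lo \<le> m" and mhi: "m \<le> m_hi"
    and ph: "\<bar>\<phi>\<bar> \<le> phi_hi" using eig_polar[OF ez] by blast
  define C where "C = cos phi_hi"
  define S where "S = sin phi_hi"
  define M where "M = m_hi"
  define L where "L = m_lo"
  have mpos: "m > 0" using mlo m_lo_pos by linarith
  have Cpos: "C > 0"
  proof (rule ccontr)
    assume "\<not> C > 0"
    hence "beta * m_lo * C \<le> 0" using beta_pos m_lo_pos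
      by (simp add: mult_nonneg_nonpos)
    thus False using beta_cos C_def by simp
  qed
  have C1: "C \<le> 1" unfolding C_def by simp
  have phnn: "0 \<le> phi_hi" using ph by linarith
  have cosphi: "cos \<phi> \<ge> C"
  proof -
    have "cos phi_hi \<le> cos \<bar>\<phi>\<bar>"
      by (rule cos_monotone_0_pi_le) (use ph phi_hi_lt in auto)
    thus ?thesis by (simp add: C_def)
  qed
  have sinphi: "\<bar>sin \<phi>\<bar> \<le> S"
  proof -
    have "sin \<bar>\<phi>\<bar> \<le> sin phi_hi"
      by (rule sin_monotone_2pi_le) (use ph phi_hi_lt in auto)
    moreover have "sin \<bar>\<phi>\<bar> = \<bar>sin \<phi>\<bar>"
    proof (cases "\<phi> \<ge> 0")
      case True
      have "sin \<phi> \<ge> 0" by (rule sin_ge_zero) (use True ph phi_hi_lt in auto)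
      thus ?thesis using True by simp
    next
      case False
      have "sin (-\<phi>) \<ge> 0" by (rule sin_ge_zero) (use False ph phi_hi_lt in auto)
      thus ?thesis using False by simp
    qed
    ultimately show ?thesis by (simp add: S_def)
  qed
  have S0: "S \<ge> 0" using sinphi by linarith
  have SC: "S\<^sup>2 + C\<^sup>2 = 1" by (simp add: S_def C_def)
  define a where "a = beta * m * cos \<phi> - 1"
  define b where "b = beta * m * sin \<phi>"
  have Rez: "Re z = m * cos \<phi>" and Imz: "Im z = m * sin \<phi>" by (simp_all add: zm)
  have Rew: "Re (complex_of_real beta * z - 1) = a" and Imw: "Im (complex_of_real beta * z - 1) = b"
    by (simp_all add: Rez Imz a_def b_def)
  define \<rho> where "\<rho> = cmod (complex_of_real beta * z - 1)"
  have rho2: "\<rho>\<^sup>2 = a\<^sup>2 + b\<^sup>2" unfolding \<rho>_def cmod_power2 Rew Imw ..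
  have rho0: "\<rho> \<ge> 0" unfolding \<rho>_def by simp
  have bL: "beta * L * C > 1" using beta_cos by (simp add: L_def C_def)
  have bmC: "beta * m * C \<ge> beta * L * C"
    using mlo beta_pos Cpos by (simp add: L_def mult_right_mono)
  have bmcos: "beta * m * cos \<phi> \<ge> beta * m * C"
    using cosphi beta_pos mpos by (simp add: mult_left_mono)
  have apos: "a > 0" using bL bmC bmcos a_def by linarith
  define rb where "rb = sqrt ((beta * M * S)\<^sup>2 + (beta * M * C - 1)\<^sup>2)"
  have rb2: "rb\<^sup>2 = (beta * M * S)\<^sup>2 + (beta * M * C - 1)\<^sup>2" unfolding rb_def by simp
  have rb0: "rb \<ge> 0" unfolding rb_def by simp
  have rho_le: "\<rho> \<le> rb"
  proof -
    have e1: "\<rho>\<^sup>2 = (beta*m)\<^sup>2 - 2 * (beta*m) * cos \<phi> + 1"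
      unfolding rho2 a_def b_def
      by (simp add: power2_eq_square algebra_simps) (metis sin_cos_squared_add3 mult.assoc distrib_left mult_1_right power2_eq_square)
    have e2: "rb\<^sup>2 = (beta*M)\<^sup>2 - 2 * (beta*M) * C + 1"
    proof -
      have "rb\<^sup>2 = (beta*M)\<^sup>2 * (S\<^sup>2 + C\<^sup>2) - 2 * (beta*M) * C + 1"
        unfolding rb2 by (simp add: power2_eq_square algebra_simps)
      thus ?thesis using SC by simp
    qed
    have "(beta*m) * cos \<phi> \<ge> (beta*m) * C" using bmcos by simp
    hence s1: "\<rho>\<^sup>2 \<le> (beta*m)\<^sup>2 - 2 * (beta*m) * C + 1" using e1 by linarith
    have bm: "beta * m \<le> beta * M" using mhi beta_pos by (simp add: M_def)
    have bmC1: "beta * m \<ge> C" using bmC bL C1 Cpos bmC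
      by (smt (verit) mult_le_cancel_right1)
    have "(beta*M)\<^sup>2 - 2 * (beta*M) * C + 1 - ((beta*m)\<^sup>2 - 2 * (beta*m) * C + 1)
        = (beta*M - beta*m) * (beta*M + beta*m - 2*C)"
      by (simp add: power2_eq_square algebra_simps)
    also have "\<dots> \<ge> 0" using bm bmC1 by (intro mult_nonneg_nonneg) linarith+
    finally have "\<rho>\<^sup>2 \<le> rb\<^sup>2" using s1 e2 by linarith
    thus ?thesis using rb0 by (rule power2_le_imp_le)
  qed
  define t where "t = (beta * L * S) / (beta * L * C - 1)"
  have t0: "t \<ge> 0" unfolding t_def
    by (rule divide_nonneg_nonneg) (use bL S0 beta_pos m_lo_pos L_def in auto)
  have bt: "\<bar>b\<bar> \<le> a * t"
  proof -
    have d: "beta * L * C - 1 > 0" using bL by simp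
    have "\<bar>b\<bar> * (beta * L * C - 1) \<le> (beta * m * S) * (beta * L * C - 1)"
      unfolding b_def using sinphi beta_pos mpos d
      by (intro mult_right_mono) (auto simp: abs_mult mult_left_mono)
    also have "\<dots> \<le> (beta * L * S) * a"
    proof -
      have "(beta * L * S) * a - (beta * m * S) * (beta * L * C - 1)
          = beta * S * (beta * m * L * (cos \<phi> - C) + (m - L))"
        unfolding a_def by (simp add: algebra_simps)
      also have "\<dots> \<ge> 0" using beta_pos S0 cosphi mlo mpos m_lo_pos L_def
        by (intro mult_nonneg_nonneg add_nonneg_nonneg) auto
      finally show ?thesis by simp
    qed
    finally have "\<bar>b\<bar> * (beta * L * C - 1) \<le> (beta * L * S) * a" .
    hence "\<bar>b\<bar> \<le> (beta * L * S) * a / (beta * L * C - 1)" using d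
      by (simp add: pos_le_divide_eq)
    thus ?thesis by (simp add: t_def algebra_simps)
  qed
  define c where "c = 1 / sqrt (1 + t\<^sup>2)"
  have sq1: "sqrt (1 + t\<^sup>2) \<ge> 1" by simp
  have c0: "c > 0" unfolding c_def using sq1 by (intro divide_pos_pos) linarith+
  have c1: "c \<le> 1" unfolding c_def using sq1 divide_le_eq_1_pos[of "sqrt (1 + t\<^sup>2)" 1] by linarith
  have a_ge: "a \<ge> \<rho> * c"
  proof -
    have tt: "0 \<le> 1 + t\<^sup>2" using zero_le_power2[of t] by linarith
    have "\<bar>b\<bar>\<^sup>2 \<le> (a*t)\<^sup>2" by (rule power_mono[OF bt]) simp
    hence b2: "b\<^sup>2 \<le> (a*t)\<^sup>2" by simp
    have "(a * sqrt (1 + t\<^sup>2))\<^sup>2 = a\<^sup>2 * (1 + t\<^sup>2)"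
      by (simp only: power_mult_distrib real_sqrt_pow2[OF tt])
    also have "\<dots> = a\<^sup>2 + (a*t)\<^sup>2" by (simp add: power_mult_distrib distrib_left)
    finally have "\<rho>\<^sup>2 \<le> (a * sqrt (1 + t\<^sup>2))\<^sup>2" using rho2 b2 by linarith
    moreover have "0 \<le> a * sqrt (1 + t\<^sup>2)" using apos sq1 by simp
    ultimately have r: "\<rho> \<le> a * sqrt (1 + t\<^sup>2)" by (rule power2_le_imp_le)
    have sp: "sqrt (1 + t\<^sup>2) > 0" using sq1 by linarith
    have "\<rho> / sqrt (1 + t\<^sup>2) \<le> a" using r sp by (simp add: pos_divide_le_eq)
    thus ?thesis unfolding c_def by simp
  qed
  have keyineq: "(\<rho> + 1) / (a + 1) \<le> (rb + 1) / (rb * c + 1)"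
  proof -
    have "(\<rho> + 1) / (a + 1) \<le> (\<rho> + 1) / (\<rho> * c + 1)"
    proof (rule divide_left_mono)
      show "\<rho> * c + 1 \<le> a + 1" using a_ge by linarith
      show "0 \<le> \<rho> + 1" using rho0 by linarith
      have "\<rho> * c \<ge> 0" using rho0 c0 by simp
      thus "0 < (a + 1) * (\<rho> * c + 1)" using apos by (intro mult_pos_pos) linarith+
    qed
    also have "\<dots> \<le> (rb + 1) / (rb * c + 1)"
    proof -
      have "(\<rho> + 1) * (rb * c + 1) \<le> (rb + 1) * (\<rho> * c + 1)"
      proof -
        have "(rb + 1) * (\<rho> * c + 1) - (\<rho> + 1) * (rb * c + 1) = (rb - \<rho>) * (1 - c)"
          by (simp add: algebra_simps)
        also have "\<dots> \<ge> 0" using rho_le c1 by auto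
        finally show ?thesis by simp
      qed
      hence h: "(\<rho> + 1) * (rb * c + 1) \<le> (rb + 1) * (\<rho> * c + 1)" .
      have p1: "\<rho> * c + 1 > 0" using rho0 c0 by (simp add: add_nonneg_pos)
      have p2: "rb * c + 1 > 0" using rb0 c0 by (simp add: add_nonneg_pos)
      have "\<rho> + 1 \<le> (rb + 1) * (\<rho> * c + 1) / (rb * c + 1)"
        using h p2 by (simp add: pos_le_divide_eq)
      hence "\<rho> + 1 \<le> (rb + 1) / (rb * c + 1) * (\<rho> * c + 1)" by (simp add: mult.commute mult.left_commute)
      thus ?thesis using p1 by (simp add: pos_divide_le_eq)
    qed
    finally show ?thesis .
  qed
  have condi: "(rb + 1) / (rb * c + 1) - 1 < alpha * tau"
    using cond unfolding Let_def
    by (simp add: cos_arctan c_def t_def L_def C_def S_def rb_def M_def)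
  have "(\<rho> + 1) / (a + 1) - 1 < alpha * tau" using keyineq condi by linarith
  hence "\<rho> + 1 - (a + 1) < alpha * tau * (a + 1)" using apos
    by (simp add: field_simps)
  moreover have "Re (complex_of_real beta * z) = a + 1" by (simp add: Rez a_def)
  ultimately show "cmod (complex_of_real beta * z - 1) - (beta * Re z - 1)
             < alpha * tau * Re (complex_of_real beta * z)"
    by (simp add: \<rho>_def Rez a_def algebra_simps)
qed

end
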